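(* Let $c$ be a cost function, $\alpha_i>0$, $m_i$ measures on $\mathbb{R}^n$, and let $(\Phi_1,\dots,\Phi_N)$ be an admissible tuple maximizing $\mathcal{BS}_{\alpha,m}$ over all admissible tuples, with $0<\int e^{-\alpha_i\Phi_i}dm_i<\infty$ for all $i$. Let $\mu_i=e^{-\alpha_i\Phi_i}m_i/\int e^{-\alpha_i\Phi_i}dm_i$ and assume the Kantorovich duality holds for $(c;\mu_1,\dots,\mu_N)$. Then $(\Phi_1,\dots,\Phi_N)$ is a minimizer of the dual transportation problem for $c$ and $\mu_1,\dots,\mu_N$.
   Context: Points of $(\mathbb{R}^n)^N$ are written $x=(x_1,\dots,x_N)$, $x_i\in\mathbb{R}^n$. A tuple $(V_1,\dots,V_N)$ of functions $V_i:\mathbb{R}^n\to(-\infty,+\infty]$ is admissible (for the cost $c$) if $\sum_{i=1}^N V_i(x_i)\ge c(x)$ for all $x$. $\mathcal{BS}_{\alpha,m}(V_1,\dots,V_N)=\prod_{i=1}^N\bigl(\int_{\mathbb{R}^n}e^{-\alpha_iV_i}dm_i\bigr)^{1/\alpha_i}$. Kantorovich duality: for probability measures $\mu_1,\dots,\mu_N$, the primal problem is to maximize $\int c\,d\pi$ over probability measures $\pi$ on $(\mathbb{R}^n)^N$ with marginals $\mu_i$; the dual problem is to minimize $\sum_i\int f_i\,d\mu_i$ over admissible tuples $(f_i)$ with $f_i\in L^1(\mu_i)$. The Kantorovich duality holds for $(c;\mu_1,\dots,\mu_N)$ if the primal problem has a maximizer, the dual problem has a minimizer, and the two optimal values are equal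 and finite. *)

theory Defs
  imports "HOL-Probability.Probability"
begin

text \<open>Index set {1..N} is rendered as a finite type 'i; points of (R^n)^N are
  functions x :: 'i \<Rightarrow> 'a with 'a a Euclidean space. Functions with values in
  (-\<infinity>,+\<infinity>] are ereal-valued functions never equal to -\<infinity>.\<close>

definition admissible :: "(('i::finite \<Rightarrow> 'a) \<Rightarrow> real) \<Rightarrow> ('i \<Rightarrow> 'a \<Rightarrow> ereal) \<Rightarrow> bool" where
  "admissible c V \<longleftrightarrow> (\<forall>i x. V i x \<noteq> -\<infinity>) \<and> (\<forall>x. ereal (c x) \<le> (\<Sum>i\<in>UNIV. V i (x i)))"

definition expw :: "real \<Rightarrow> ('a \<Rightarrow> ereal) \<Rightarrow> 'a \<Rightarrow> ennreal" where
  "expw \<alpha> \<phi> x = (if \<phi> x = \<infinity> then 0 else ennreal (exp (- \<alpha> * real_of_ereal (\<phi> x))))"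

definition enn_powr :: "ennreal \<Rightarrow> real \<Rightarrow> ennreal" where
  "enn_powr I p = (if I = \<infinity> then \<infinity> else ennreal (enn2real I powr p))"

definition BS :: "('i::finite \<Rightarrow> real) \<Rightarrow> ('i \<Rightarrow> 'a measure) \<Rightarrow> ('i \<Rightarrow> 'a \<Rightarrow> ereal) \<Rightarrow> ennreal" where
  "BS \<alpha> m V = (\<Prod>i\<in>UNIV. enn_powr (\<integral>\<^sup>+ x. expw (\<alpha> i) (V i) x \<partial>m i) (1 / \<alpha> i))"

definition is_plan :: "('i::finite \<Rightarrow> 'a::euclidean_space measure) \<Rightarrow> ('i \<Rightarrow> 'a) measure \<Rightarrow> bool" where
  "is_plan \<mu> \<pi> \<longleftrightarrow> prob_space \<pi> \<and> sets \<pi> = sets (PiM UNIV (\<lambda>_. borel))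
     \<and> (\<forall>i. distr \<pi> borel (\<lambda>x. x i) = \<mu> i)"

definition primal_max :: "(('i::finite \<Rightarrow> 'a::euclidean_space) \<Rightarrow> real) \<Rightarrow> ('i \<Rightarrow> 'a measure) \<Rightarrow> ('i \<Rightarrow> 'a) measure \<Rightarrow> bool" where
  "primal_max c \<mu> \<pi> \<longleftrightarrow> is_plan \<mu> \<pi> \<and> integrable \<pi> c \<and>
     (\<forall>\<pi>'. is_plan \<mu> \<pi>' \<and> integrable \<pi>' c \<longrightarrow> (\<integral>x. c x \<partial>\<pi>') \<le> (\<integral>x. c x \<partial>\<pi>))"

definition dual_feasible :: "(('i::finite \<Rightarrow> 'a) \<Rightarrow> real) \<Rightarrow> ('i \<Rightarrow> 'a measure) \<Rightarrow> ('i \<Rightarrow> 'a \<Rightarrow> ereal) \<Rightarrow> bool" where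
  "dual_feasible c \<mu> f \<longleftrightarrow> admissible c f \<and>
     (\<forall>i. f i \<in> borel_measurable (\<mu> i) \<and> (AE x in \<mu> i. f i x \<noteq> \<infinity>)
          \<and> integrable (\<mu> i) (\<lambda>x. real_of_ereal (f i x)))"

definition dual_value :: "('i::finite \<Rightarrow> 'a measure) \<Rightarrow> ('i \<Rightarrow> 'a \<Rightarrow> ereal) \<Rightarrow> real" where
  "dual_value \<mu> f = (\<Sum>i\<in>UNIV. \<integral>x. real_of_ereal (f i x) \<partial>\<mu> i)"

definition dual_min :: "(('i::finite \<Rightarrow> 'a) \<Rightarrow> real) \<Rightarrow> ('i \<Rightarrow> 'a measure) \<Rightarrow> ('i \<Rightarrow> 'a \<Rightarrow> ereal) \<Rightarrow> bool" where
  "dual_min c \<mu> f \<longleftrightarrow> dual_feasible c \<mu> f \<and>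
     (\<forall>g. dual_feasible c \<mu> g \<longrightarrow> dual_value \<mu> f \<le> dual_value \<mu> g)"

definition kantorovich_duality :: "(('i::finite \<Rightarrow> 'a::euclidean_space) \<Rightarrow> real) \<Rightarrow> ('i \<Rightarrow> 'a measure) \<Rightarrow> bool" where
  "kantorovich_duality c \<mu> \<longleftrightarrow> (\<exists>\<pi> f. primal_max c \<mu> \<pi> \<and> dual_min c \<mu> f \<and>
     (\<integral>x. c x \<partial>\<pi>) = dual_value \<mu> f)"

end

theory Submission
  imports Defs
begin

lemma aux_bound: "max 0 (-(a - b)) \<le> (E::real) \<Longrightarrow> 0 \<le> E \<Longrightarrow> norm (max 0 b) \<le> norm (E + \<bar>a\<bar>)"
  by (auto simp: max_def abs_if split: if_splits)

lemma expw_meas[measurable]: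
  assumes [measurable]: "\<phi> \<in> borel_measurable M"
  shows "expw a \<phi> \<in> borel_measurable M"
  unfolding expw_def by measurable

context
  fixes \<alpha> :: real and m :: "'a::euclidean_space measure" and \<phi> :: "'a \<Rightarrow> ereal" and Z :: ennreal
  assumes apos: "\<alpha> > 0" and msets: "sets m = sets borel"
    and phim[measurable]: "\<phi> \<in> borel_measurable borel"
    and Zdef: "Z = (\<integral>\<^sup>+ x. expw \<alpha> \<phi> x \<partial>m)" and Zpos: "0 < Z" and Zfin: "Z < \<infinity>"
begin

definition "F x = expw \<alpha> \<phi> x / Z"
definition "mu = density m F"

lemma phim'[measurable]: "\<phi> \<in> borel_measurable m"
  using measurable_cong_sets[OF msets refl] phim by blast

lemma F_meas[measurable]: "F \<in> borel_measurable m"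
  unfolding F_def by measurable

lemma mu_sets: "sets mu = sets borel" unfolding mu_def using msets by simp

lemma mu_prob: "prob_space mu"
proof
  have "emeasure mu (space mu) = (\<integral>\<^sup>+ x. F x * indicator (space m) x \<partial>m)"
    unfolding mu_def space_density by (rule emeasure_density) (auto intro: F_meas)
  also have "\<dots> = (\<integral>\<^sup>+ x. F x \<partial>m)" by (rule nn_integral_cong) simp
  also have "\<dots> = (\<integral>\<^sup>+ x. expw \<alpha> \<phi> x \<partial>m) / Z" unfolding F_def by (rule nn_integral_divide) measurable
  also have "\<dots> = Z / Z" by (simp only: Zdef[symmetric])
  also have "\<dots> = 1" using Zpos Zfin by (simp add: ennreal_divide_self)
  finally show "emeasure mu (space mu) = 1" .
qed

lemma AE_fin: "AE x in mu. \<phi> x \<noteq> \<infinity>"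
  unfolding mu_def
  by (subst AE_density) (auto simp: F_def expw_def)


context
  fixes f :: "'a \<Rightarrow> ereal"
  assumes fm[measurable]: "f \<in> borel_measurable borel" and ffin: "AE x in mu. f x \<noteq> \<infinity>"
begin

definition "h x = real_of_ereal (f x) - real_of_ereal (\<phi> x)"
definition "G x = ennreal (exp (- \<alpha> * h x))"

lemma fm'[measurable]: "f \<in> borel_measurable m"
  using measurable_cong_sets[OF msets refl] fm by blast
lemma fmu[measurable]: "f \<in> borel_measurable mu"
  using measurable_cong_sets[OF mu_sets refl] fm by blast
lemma phimu[measurable]: "\<phi> \<in> borel_measurable mu"
  using measurable_cong_sets[OF mu_sets refl] phim by blast
lemma h_meas[measurable]: "h \<in> borel_measurable mu" unfolding h_def by measurable
lemma G_meas[measurable]: "G \<in> borel_measurable m" unfolding G_def h_def by measurable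
lemma G_meas'[measurable]: "G \<in> borel_measurable mu" unfolding G_def by measurable

lemma J_le: "Z * (\<integral>\<^sup>+ x. G x \<partial>mu) \<le> (\<integral>\<^sup>+ x. expw \<alpha> f x \<partial>m)"
proof -
  have ae: "AE x in m. 0 < F x \<longrightarrow> f x \<noteq> \<infinity>"
    using ffin unfolding mu_def by (subst (asm) AE_density) auto
  have "(\<integral>\<^sup>+ x. G x \<partial>mu) = (\<integral>\<^sup>+ x. F x * G x \<partial>m)"
    unfolding mu_def by (simp add: nn_integral_density)
  also have "\<dots> \<le> (\<integral>\<^sup>+ x. expw \<alpha> f x / Z \<partial>m)"
  proof (rule nn_integral_mono_AE)
    show "AE x in m. F x * G x \<le> expw \<alpha> f x / Z"
      using ae
    proof eventually_elim
      case (elim x)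
      show ?case
      proof (cases "F x = 0")
        case True then show ?thesis by simp
      next
        case False
        then have "f x \<noteq> \<infinity>" "\<phi> x \<noteq> \<infinity>" using elim by (auto simp: F_def expw_def)
        then have "expw \<alpha> \<phi> x * G x = expw \<alpha> f x"
          apply (simp add: expw_def G_def h_def ennreal_mult''[symmetric])
          apply (simp only: mult_exp_exp)
          apply (simp add: algebra_simps)
          done
        then show ?thesis unfolding F_def by (simp add: ennreal_divide_times ennreal_times_divide mult.commute)
      qed
    qed
  qed
  also have "\<dots> = (\<integral>\<^sup>+ x. expw \<alpha> f x \<partial>m) / Z" by (rule nn_integral_divide) measurable
  finally have "Z * (\<integral>\<^sup>+ x. G x \<partial>mu) \<le> Z * ((\<integral>\<^sup>+ x. expw \<alpha> f x \<partial>m) / Z)"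
    by (rule mult_left_mono) simp
  also have "\<dots> = (\<integral>\<^sup>+ x. expw \<alpha> f x \<partial>m)"
    using Zpos Zfin by (simp add: ennreal_times_divide mult.commute[of Z] ennreal_mult_divide_eq)
  finally show ?thesis .
qed

lemma J_pos: "0 < (\<integral>\<^sup>+ x. G x \<partial>mu)"
proof (rule ccontr)
  assume "\<not> ?thesis"
  then have "(\<integral>\<^sup>+ x. G x \<partial>mu) = 0" by (simp add: not_less)
  then have "AE x in mu. G x = 0" by (subst (asm) nn_integral_0_iff_AE) auto
  then have "AE x in mu. False" by eventually_elim (simp add: G_def)
  then show False using prob_space.AE_False[OF mu_prob] by simp
qed

lemma Gint: 
  assumes "(\<integral>\<^sup>+ x. G x \<partial>mu) < \<infinity>"
  shows "integrable mu (\<lambda>x. exp (- \<alpha> * h x))"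
proof (rule integrableI_nn_integral_finite)
  show "(\<integral>\<^sup>+ x. ennreal (exp (- \<alpha> * h x)) \<partial>mu) = ennreal (enn2real (\<integral>\<^sup>+ x. G x \<partial>mu))"
    using assms unfolding G_def by (simp add: ennreal_enn2real_if)
qed auto

lemma phi_pos_int:
  assumes J: "(\<integral>\<^sup>+ x. G x \<partial>mu) < \<infinity>" and fi: "integrable mu (\<lambda>x. real_of_ereal (f x))"
  shows "integrable mu (\<lambda>x. max 0 (real_of_ereal (\<phi> x)))"
proof -
  have i1: "integrable mu (\<lambda>x. exp (- \<alpha> * h x) / \<alpha> + \<bar>real_of_ereal (f x)\<bar>)"
  proof (rule Bochner_Integration.integrable_add)
    show "integrable mu (\<lambda>x. exp (- \<alpha> * h x) / \<alpha>)" using Gint[OF J] by simp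
    show "integrable mu (\<lambda>x. \<bar>real_of_ereal (f x)\<bar>)" using fi by (rule integrable_abs)
  qed
  show ?thesis
  proof (rule Bochner_Integration.integrable_bound[OF i1])
    show "AE x in mu. norm (max 0 (real_of_ereal (\<phi> x))) \<le> norm (exp (- \<alpha> * h x) / \<alpha> + \<bar>real_of_ereal (f x)\<bar>)"
    proof (rule AE_I2)
      fix x
      have e: "\<alpha> * max 0 (- h x) \<le> exp (- \<alpha> * h x)"
      proof (cases "h x \<le> 0")
        case True
        have "\<alpha> * max 0 (- h x) = - \<alpha> * h x" using True by simp
        also have "\<dots> \<le> 1 + (- \<alpha> * h x)" by simp
        also have "\<dots> \<le> exp (- \<alpha> * h x)" by (rule exp_ge_add_one_self)
        finally show ?thesis .
      qed simp
      then have "max 0 (- h x) \<le> exp (- \<alpha> * h x) / \<alpha>" using apos by (metis pos_le_divide_eq mult.commute)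
      moreover have "0 \<le> exp (- \<alpha> * h x) / \<alpha>" using apos by simp
      ultimately show "norm (max 0 (real_of_ereal (\<phi> x))) \<le> norm (exp (- \<alpha> * h x) / \<alpha> + \<bar>real_of_ereal (f x)\<bar>)"
        unfolding h_def by (rule aux_bound)
    qed
  qed measurable
qed

lemma jensen:
  assumes J: "(\<integral>\<^sup>+ x. G x \<partial>mu) < \<infinity>" and hi: "integrable mu h"
  shows "exp (- \<alpha> * (\<integral>x. h x \<partial>mu)) \<le> enn2real (\<integral>\<^sup>+ x. G x \<partial>mu)"
proof -
  interpret P: prob_space mu by (rule mu_prob)
  define a where "a = (\<integral>x. h x \<partial>mu)"
  have "(\<integral>x. exp (- \<alpha> * a) * (1 - \<alpha> * (h x - a)) \<partial>mu) \<le> (\<integral>x. exp (- \<alpha> * h x) \<partial>mu)"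
  proof (rule integral_mono)
    show "integrable mu (\<lambda>x. exp (- \<alpha> * a) * (1 - \<alpha> * (h x - a)))" using hi by auto
    show "integrable mu (\<lambda>x. exp (- \<alpha> * h x))" by (rule Gint[OF J])
    fix x
    have "1 + (- \<alpha> * (h x - a)) \<le> exp (- \<alpha> * (h x - a))" by (rule exp_ge_add_one_self)
    then have "exp (- \<alpha> * a) * (1 - \<alpha> * (h x - a)) \<le> exp (- \<alpha> * a) * exp (- \<alpha> * (h x - a))"
      by (intro mult_left_mono) auto
    also have "\<dots> = exp (- \<alpha> * h x)" by (simp only: mult_exp_exp) (simp add: algebra_simps)
    finally show "exp (- \<alpha> * a) * (1 - \<alpha> * (h x - a)) \<le> exp (- \<alpha> * h x)" .
  qed
  also have "(\<integral>x. exp (- \<alpha> * h x) \<partial>mu) = enn2real (\<integral>\<^sup>+ x. G x \<partial>mu)"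
    unfolding G_def by (rule integral_eq_nn_integral) auto
  also have "(\<integral>x. exp (- \<alpha> * a) * (1 - \<alpha> * (h x - a)) \<partial>mu) = exp (- \<alpha> * a)"
    using hi by (simp add: a_def algebra_simps P.prob_space)
  finally show ?thesis unfolding a_def .
qed

end

lemma D_eq: "density m (\<lambda>x. expw \<alpha> \<phi> x / Z) = mu" by (simp add: mu_def F_def[abs_def])

lemma ex_basic:
  "prob_space (density m (\<lambda>x. expw \<alpha> \<phi> x / Z))"
  "sets (density m (\<lambda>x. expw \<alpha> \<phi> x / Z)) = sets borel"
  "AE x in density m (\<lambda>x. expw \<alpha> \<phi> x / Z). \<phi> x \<noteq> \<infinity>"
  unfolding D_eq by (rule mu_prob mu_sets AE_fin)+

lemma ex_f:
  assumes fm: "f \<in> borel_measurable borel"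
    and ffin: "AE x in density m (\<lambda>x. expw \<alpha> \<phi> x / Z). f x \<noteq> \<infinity>"
  defines "J \<equiv> (\<integral>\<^sup>+ x. ennreal (exp (- \<alpha> * (real_of_ereal (f x) - real_of_ereal (\<phi> x))))
           \<partial>density m (\<lambda>x. expw \<alpha> \<phi> x / Z))"
  shows "Z * J \<le> (\<integral>\<^sup>+ x. expw \<alpha> f x \<partial>m)"
    and "0 < J"
    and "J < \<infinity> \<Longrightarrow> integrable (density m (\<lambda>x. expw \<alpha> \<phi> x / Z)) (\<lambda>x. real_of_ereal (f x))
          \<Longrightarrow> integrable (density m (\<lambda>x. expw \<alpha> \<phi> x / Z)) (\<lambda>x. max 0 (real_of_ereal (\<phi> x)))"
    and "J < \<infinity> \<Longrightarrow> integrable (density m (\<lambda>x. expw \<alpha> \<phi> x / Z)) (\<lambda>x. real_of_ereal (f x) - real_of_ereal (\<phi> x))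
          \<Longrightarrow> exp (- \<alpha> * (\<integral>x. real_of_ereal (f x) - real_of_ereal (\<phi> x) \<partial>density m (\<lambda>x. expw \<alpha> \<phi> x / Z))) \<le> enn2real J"
proof -
  note ff = ffin[unfolded D_eq]
  have JJ: "J = (\<integral>\<^sup>+ x. G f x \<partial>mu)" unfolding J_def D_eq G_def[OF fm ff, abs_def] h_def[OF fm ff, abs_def] ..
  show "Z * J \<le> (\<integral>\<^sup>+ x. expw \<alpha> f x \<partial>m)" unfolding JJ by (rule J_le[OF fm ff])
  show "0 < J" unfolding JJ by (rule J_pos[OF fm ff])
  show "J < \<infinity> \<Longrightarrow> integrable (density m (\<lambda>x. expw \<alpha> \<phi> x / Z)) (\<lambda>x. real_of_ereal (f x))
          \<Longrightarrow> integrable (density m (\<lambda>x. expw \<alpha> \<phi> x / Z)) (\<lambda>x. max 0 (real_of_ereal (\<phi> x)))"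
    unfolding JJ D_eq by (rule phi_pos_int[OF fm ff])
  show "J < \<infinity> \<Longrightarrow> integrable (density m (\<lambda>x. expw \<alpha> \<phi> x / Z)) (\<lambda>x. real_of_ereal (f x) - real_of_ereal (\<phi> x))
          \<Longrightarrow> exp (- \<alpha> * (\<integral>x. real_of_ereal (f x) - real_of_ereal (\<phi> x) \<partial>density m (\<lambda>x. expw \<alpha> \<phi> x / Z))) \<le> enn2real J"
    unfolding JJ D_eq using jensen[OF fm ff] unfolding h_def[OF fm ff, abs_def] by blast
qed

end


lemma aux_bound2: "(c::real) \<le> p + s \<Longrightarrow> s \<le> t \<Longrightarrow> t \<le> T \<Longrightarrow> 0 \<le> T \<Longrightarrow> norm (max 0 (- p)) \<le> norm (\<bar>c\<bar> + T)"
  by (auto simp: max_def abs_if split: if_splits)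

lemma ereal_sum_real:
  assumes "\<And>i. i \<in> A \<Longrightarrow> V i \<noteq> \<infinity> \<and> V i \<noteq> -\<infinity>"
  shows "(\<Sum>i\<in>A. V i) = ereal (\<Sum>i\<in>A. real_of_ereal (V i))"
proof -
  have "(\<Sum>i\<in>A. V i) = (\<Sum>i\<in>A. ereal (real_of_ereal (V i)))"
  proof (intro sum.cong refl)
    fix i assume "i \<in> A"
    then have "V i \<noteq> \<infinity>" "V i \<noteq> -\<infinity>" using assms by auto
    then show "V i = ereal (real_of_ereal (V i))" by (cases "V i") auto
  qed
  also have "\<dots> = ereal (\<Sum>i\<in>A. real_of_ereal (V i))" by simp
  finally show ?thesis .
qed

theorem corollary2p2:
  fixes c :: "('i::finite \<Rightarrow> 'a::euclidean_space) \<Rightarrow> real"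
    and \<alpha> :: "'i \<Rightarrow> real"
    and m \<mu> :: "'i \<Rightarrow> 'a measure"
    and \<Phi> :: "'i \<Rightarrow> 'a \<Rightarrow> ereal"
  assumes alpha_pos: "\<And>i. \<alpha> i > 0"
    and m_sets: "\<And>i. sets (m i) = sets borel"
    and Phi_meas: "\<And>i. \<Phi> i \<in> borel_measurable borel"
    and Phi_adm: "admissible c \<Phi>"
    and Phi_max: "\<And>V. admissible c V \<Longrightarrow> BS \<alpha> m V \<le> BS \<alpha> m \<Phi>"
    and int_pos: "\<And>i. 0 < (\<integral>\<^sup>+ x. expw (\<alpha> i) (\<Phi> i) x \<partial>m i)"
    and int_fin: "\<And>i. (\<integral>\<^sup>+ x. expw (\<alpha> i) (\<Phi> i) x \<partial>m i) < \<infinity>"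
    and mu_def: "\<And>i. \<mu> i = density (m i)
                   (\<lambda>x. expw (\<alpha> i) (\<Phi> i) x / (\<integral>\<^sup>+ y. expw (\<alpha> i) (\<Phi> i) y \<partial>m i))"
    and duality: "kantorovich_duality c \<mu>"
  shows "dual_min c \<mu> \<Phi>"
proof -
  define Z where "Z i = (\<integral>\<^sup>+ y. expw (\<alpha> i) (\<Phi> i) y \<partial>m i)" for i
  have mu_eq: "\<mu> i = density (m i) (\<lambda>x. expw (\<alpha> i) (\<Phi> i) x / Z i)" for i
    unfolding Z_def by (rule mu_def)
  have Zpos: "0 < Z i" and Zfin: "Z i < \<infinity>" for i unfolding Z_def using int_pos int_fin by auto
  note basic = ex_basic[OF alpha_pos m_sets Phi_meas Z_def Zpos Zfin, folded mu_eq]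
  note exf = ex_f[OF alpha_pos m_sets Phi_meas Z_def Zpos Zfin, folded mu_eq]
  have prob: "prob_space (\<mu> i)" for i by (rule basic(1))
  have musets: "sets (\<mu> i) = sets borel" for i by (rule basic(2))
  have Phifin: "AE x in \<mu> i. \<Phi> i x \<noteq> \<infinity>" for i by (rule basic(3))
  have Phininf: "\<Phi> i x \<noteq> -\<infinity>" for i x using Phi_adm unfolding admissible_def by auto
  define J where "J g i = (\<integral>\<^sup>+ x. ennreal (exp (- \<alpha> i * (real_of_ereal (g i x) - real_of_ereal (\<Phi> i x)))) \<partial>\<mu> i)"
    for g :: "'i \<Rightarrow> 'a \<Rightarrow> ereal" and i
  have gmeas: "g i \<in> borel_measurable borel" if "dual_feasible c \<mu> g" for g i
    using that unfolding dual_feasible_def using measurable_cong_sets[OF musets refl] by blast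
  have gfin: "AE x in \<mu> i. g i x \<noteq> \<infinity>" if "dual_feasible c \<mu> g" for g i
    using that unfolding dual_feasible_def by blast
  have key: "(\<forall>i. J g i < \<infinity>) \<and> (\<Prod>i\<in>UNIV. enn2real (J g i) powr (1 / \<alpha> i)) \<le> 1"
    if gf: "dual_feasible c \<mu> g" for g
  proof -
    define I where "I i = (\<integral>\<^sup>+ x. expw (\<alpha> i) (g i) x \<partial>m i)" for i
    define p where "p i = 1 / \<alpha> i" for i
    have p0: "0 \<le> p i" for i using alpha_pos[of i] by (simp add: p_def)
    have BSle: "BS \<alpha> m g \<le> BS \<alpha> m \<Phi>" using gf unfolding dual_feasible_def by (intro Phi_max) blast
    have ZJ: "Z i * J g i \<le> I i" for i
      unfolding J_def I_def by (rule exf(1)[OF gmeas[OF gf] gfin[OF gf]])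
    have Jpos: "0 < J g i" for i
      unfolding J_def by (rule exf(2)[OF gmeas[OF gf] gfin[OF gf]])
    have Ipos: "0 < I i" for i
    proof -
      have "Z i * J g i \<noteq> 0" using Zpos[of i] Jpos[of i] by (metis mult_eq_0_iff not_gr_zero)
      then show ?thesis using ZJ[of i] by (metis not_gr_zero le_zero_eq)
    qed
    have BSPhi: "BS \<alpha> m \<Phi> = ennreal (\<Prod>i\<in>UNIV. enn2real (Z i) powr p i)"
    proof -
      have "BS \<alpha> m \<Phi> = (\<Prod>i\<in>UNIV. ennreal (enn2real (Z i) powr p i))"
        unfolding BS_def enn_powr_def Z_def[symmetric] p_def using Zfin by (intro prod.cong refl) (auto simp: less_top[symmetric])
      also have "\<dots> = ennreal (\<Prod>i\<in>UNIV. enn2real (Z i) powr p i)" by (rule prod_ennreal) simp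
      finally show ?thesis .
    qed
    have Ifin: "I i < \<infinity>" for i
    proof (rule ccontr)
      assume "\<not> I i < \<infinity>"
      then have Ii: "I i = \<infinity>" by (simp add: not_less top_unique)
      have "BS \<alpha> m g = (\<Prod>j\<in>UNIV. enn_powr (I j) (p j))"
        unfolding BS_def I_def p_def ..
      also have "\<dots> = top"
      proof (subst ennreal_prod_eq_top, intro conjI ballI bexI)
        fix j :: 'i
        show "enn_powr (I j) (p j) \<noteq> 0"
        proof (cases "I j = \<infinity>")
          case False
          then have "0 < enn2real (I j)" using Ipos[of j] by (simp add: enn2real_positive_iff less_top)
          then show ?thesis using False by (simp add: enn_powr_def)
        qed (simp add: enn_powr_def)
      next
        show "enn_powr (I i) (p i) = top" using Ii by (simp add: enn_powr_def)
      qed auto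
      finally have "BS \<alpha> m g = top" .
      then show False using BSle BSPhi by (simp add: top_unique)
    qed
    have Jfin: "J g i < \<infinity>" for i
    proof (rule ccontr)
      assume "\<not> J g i < \<infinity>"
      then have "J g i = \<infinity>" by (simp add: not_less top_unique)
      then have "Z i * J g i = \<infinity>" using Zpos[of i] by simp
      then show False using ZJ[of i] Ifin[of i] by (simp add: top_unique)
    qed
    have BSg: "BS \<alpha> m g = ennreal (\<Prod>i\<in>UNIV. enn2real (I i) powr p i)"
    proof -
      have "BS \<alpha> m g = (\<Prod>i\<in>UNIV. ennreal (enn2real (I i) powr p i))"
        unfolding BS_def enn_powr_def I_def[symmetric] p_def using Ifin by (intro prod.cong refl) (auto simp: less_top[symmetric])
      also have "\<dots> = ennreal (\<Prod>i\<in>UNIV. enn2real (I i) powr p i)" by (rule prod_ennreal) simp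
      finally show ?thesis .
    qed
    have r1: "(\<Prod>i\<in>UNIV. enn2real (I i) powr p i) \<le> (\<Prod>i\<in>UNIV. enn2real (Z i) powr p i)"
      using BSle unfolding BSg BSPhi by (subst (asm) ennreal_le_iff) (auto intro: prod_nonneg)
    have r2: "enn2real (Z i) * enn2real (J g i) \<le> enn2real (I i)" for i
      using enn2real_mono[OF ZJ[of i]] Ifin[of i] by (simp add: enn2real_mult)
    have "(\<Prod>i\<in>UNIV. enn2real (Z i) powr p i) * (\<Prod>i\<in>UNIV. enn2real (J g i) powr p i)
        = (\<Prod>i\<in>UNIV. (enn2real (Z i) * enn2real (J g i)) powr p i)"
      by (simp add: powr_mult prod.distrib)
    also have "\<dots> \<le> (\<Prod>i\<in>UNIV. enn2real (I i) powr p i)"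
      by (intro prod_mono conjI powr_mono2 p0 r2) auto
    also have "\<dots> \<le> (\<Prod>i\<in>UNIV. enn2real (Z i) powr p i)" by (rule r1)
    finally have r3: "(\<Prod>i\<in>UNIV. enn2real (Z i) powr p i) * (\<Prod>i\<in>UNIV. enn2real (J g i) powr p i)
        \<le> (\<Prod>i\<in>UNIV. enn2real (Z i) powr p i) * 1" by simp
    have "0 < (\<Prod>i\<in>UNIV. enn2real (Z i) powr p i)"
    proof (rule prod_pos)
      fix i :: 'i
      have "0 < enn2real (Z i)" using Zpos[of i] Zfin[of i] by (simp add: enn2real_positive_iff)
      then show "0 < enn2real (Z i) powr p i" by simp
    qed
    then have "(\<Prod>i\<in>UNIV. enn2real (J g i) powr p i) \<le> 1"
      using r3 by (simp only: mult_le_cancel_left_pos)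
    then show ?thesis using Jfin unfolding p_def by blast
  qed
  obtain \<pi> f where pm: "primal_max c \<mu> \<pi>" and dm: "dual_min c \<mu> f"
    using duality unfolding kantorovich_duality_def by blast
  have ff: "dual_feasible c \<mu> f" using dm unfolding dual_min_def by blast
  have Phi_pos: "integrable (\<mu> i) (\<lambda>x. max 0 (real_of_ereal (\<Phi> i x)))" for i
  proof -
    have "J f i < \<infinity>" using key[OF ff] by blast
    moreover have "integrable (\<mu> i) (\<lambda>x. real_of_ereal (f i x))" using ff unfolding dual_feasible_def by blast
    ultimately show ?thesis using exf(3)[OF gmeas[OF ff] gfin[OF ff]] unfolding J_def by blast
  qed
  have Phi_neg: "integrable (\<mu> i) (\<lambda>x. max 0 (- real_of_ereal (\<Phi> i x)))" for i
  proof -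
    have plan: "is_plan \<mu> \<pi>" and cint: "integrable \<pi> c" using pm unfolding primal_max_def by auto
    have psets: "sets \<pi> = sets (PiM UNIV (\<lambda>_. borel))" and marg: "\<And>j. distr \<pi> borel (\<lambda>x. x j) = \<mu> j"
      using plan unfolding is_plan_def by auto
    have proj[measurable]: "(\<lambda>x. x j) \<in> measurable \<pi> borel" for j
      unfolding measurable_cong_sets[OF psets refl] by (rule measurable_component_singleton) simp
    have Pm[measurable]: "\<Phi> j \<in> borel_measurable borel" for j by (rule Phi_meas)
    have cm[measurable]: "c \<in> borel_measurable \<pi>" using cint by auto
    have aeF: "AE x in \<pi>. \<forall>j\<in>UNIV. \<Phi> j (x j) \<noteq> \<infinity>"
    proof (rule AE_finite_allI)
      fix j
      have "AE y in distr \<pi> borel (\<lambda>x. x j). \<Phi> j y \<noteq> \<infinity>" unfolding marg by (rule Phifin)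
      then show "AE x in \<pi>. \<Phi> j (x j) \<noteq> \<infinity>" by (subst (asm) AE_distr_iff) auto
    qed simp
    have posint: "integrable \<pi> (\<lambda>x. max 0 (real_of_ereal (\<Phi> j (x j))))" for j
      using Phi_pos[of j] integrable_distr_eq[OF proj[of j], of "\<lambda>y. max 0 (real_of_ereal (\<Phi> j y))"] unfolding marg by simp
    have bint: "integrable \<pi> (\<lambda>x. \<bar>c x\<bar> + (\<Sum>j\<in>UNIV. max 0 (real_of_ereal (\<Phi> j (x j)))))"
      using cint posint by (intro Bochner_Integration.integrable_add integrable_abs Bochner_Integration.integrable_sum) auto
    have "integrable \<pi> (\<lambda>x. max 0 (- real_of_ereal (\<Phi> i (x i))))"
    proof (rule Bochner_Integration.integrable_bound[OF bint])
      show "AE x in \<pi>. norm (max 0 (- real_of_ereal (\<Phi> i (x i))))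
               \<le> norm (\<bar>c x\<bar> + (\<Sum>j\<in>UNIV. max 0 (real_of_ereal (\<Phi> j (x j)))))"
        using aeF
      proof eventually_elim
        case (elim x)
        have "ereal (c x) \<le> (\<Sum>j\<in>UNIV. \<Phi> j (x j))" using Phi_adm unfolding admissible_def by blast
        also have "\<dots> = ereal (\<Sum>j\<in>UNIV. real_of_ereal (\<Phi> j (x j)))"
          using elim Phininf by (intro ereal_sum_real) auto
        finally have c1: "c x \<le> (\<Sum>j\<in>UNIV. real_of_ereal (\<Phi> j (x j)))" by simp
        have s1: "(\<Sum>j\<in>UNIV. real_of_ereal (\<Phi> j (x j))) = real_of_ereal (\<Phi> i (x i)) + (\<Sum>j\<in>UNIV-{i}. real_of_ereal (\<Phi> j (x j)))"
          by (simp add: sum.remove)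
        have s2: "(\<Sum>j\<in>UNIV-{i}. real_of_ereal (\<Phi> j (x j))) \<le> (\<Sum>j\<in>UNIV-{i}. max 0 (real_of_ereal (\<Phi> j (x j))))"
          by (intro sum_mono) simp
        have s3: "(\<Sum>j\<in>UNIV-{i}. max 0 (real_of_ereal (\<Phi> j (x j)))) \<le> (\<Sum>j\<in>UNIV. max 0 (real_of_ereal (\<Phi> j (x j))))"
          by (intro sum_mono2) auto
        have s4: "0 \<le> (\<Sum>j\<in>UNIV. max 0 (real_of_ereal (\<Phi> j (x j))))" by (intro sum_nonneg) simp
        have c2: "c x \<le> real_of_ereal (\<Phi> i (x i)) + (\<Sum>j\<in>UNIV-{i}. real_of_ereal (\<Phi> j (x j)))"
          using c1 s1 by linarith
        show ?case by (rule aux_bound2[OF c2 s2 s3 s4])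
      qed
    qed measurable
    then show ?thesis
      using integrable_distr_eq[OF proj[of i], of "\<lambda>y. max 0 (- real_of_ereal (\<Phi> i y))"] unfolding marg by simp
  qed
  have Phi_int: "integrable (\<mu> i) (\<lambda>x. real_of_ereal (\<Phi> i x))" for i
  proof -
    have "integrable (\<mu> i) (\<lambda>x. max 0 (real_of_ereal (\<Phi> i x)) - max 0 (- real_of_ereal (\<Phi> i x)))"
      using Phi_pos Phi_neg by (rule Bochner_Integration.integrable_diff)
    moreover have "max 0 t - max 0 (- t) = t" for t :: real by linarith
    ultimately show ?thesis by simp
  qed
  have Phi_feas: "dual_feasible c \<mu> \<Phi>"
    unfolding dual_feasible_def
    using Phi_adm Phi_int Phifin measurable_cong_sets[OF musets refl] Phi_meas by blast
  show ?thesis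
    unfolding dual_min_def
  proof (intro conjI allI impI Phi_feas)
    fix g assume gf: "dual_feasible c \<mu> g"
    have Jfin: "J g i < \<infinity>" for i using key[OF gf] by blast
    have prod1: "(\<Prod>i\<in>UNIV. enn2real (J g i) powr (1 / \<alpha> i)) \<le> 1" using key[OF gf] by blast
    have gint: "integrable (\<mu> i) (\<lambda>x. real_of_ereal (g i x))" for i
      using gf unfolding dual_feasible_def by blast
    define a where "a i = (\<integral>x. real_of_ereal (g i x) - real_of_ereal (\<Phi> i x) \<partial>\<mu> i)" for i
    have dint: "integrable (\<mu> i) (\<lambda>x. real_of_ereal (g i x) - real_of_ereal (\<Phi> i x))" for i
      using gint Phi_int by (rule Bochner_Integration.integrable_diff)
    have a_eq: "a i = (\<integral>x. real_of_ereal (g i x) \<partial>\<mu> i) - (\<integral>x. real_of_ereal (\<Phi> i x) \<partial>\<mu> i)" for i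
      unfolding a_def using gint Phi_int by (rule Bochner_Integration.integral_diff)
    have ea: "exp (- a i) \<le> enn2real (J g i) powr (1 / \<alpha> i)" for i
    proof -
      have "exp (- \<alpha> i * a i) \<le> enn2real (J g i)"
        using exf(4)[OF gmeas[OF gf] gfin[OF gf]] Jfin dint unfolding J_def a_def by blast
      then have "exp (- \<alpha> i * a i) powr (1 / \<alpha> i) \<le> enn2real (J g i) powr (1 / \<alpha> i)"
        using alpha_pos[of i] by (intro powr_mono2) auto
      moreover have "exp (- \<alpha> i * a i) powr (1 / \<alpha> i) = exp (- a i)"
        using alpha_pos[of i] by (simp add: powr_def)
      ultimately show ?thesis by simp
    qed
    have "exp (\<Sum>i\<in>UNIV. - a i) = (\<Prod>i\<in>UNIV. exp (- a i))" by (simp add: exp_sum)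
    also have "\<dots> \<le> (\<Prod>i\<in>UNIV. enn2real (J g i) powr (1 / \<alpha> i))"
      by (rule prod_mono) (use ea in auto)
    also have "\<dots> \<le> 1" by (rule prod1)
    finally have "(\<Sum>i\<in>UNIV. - a i) \<le> 0" by simp
    then have "0 \<le> (\<Sum>i\<in>UNIV. a i)" by (simp add: sum_negf)
    then show "dual_value \<mu> \<Phi> \<le> dual_value \<mu> g"
      unfolding dual_value_def a_eq by (simp add: sum_subtractf)
  qed
qed

end
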